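(* Let $\mathcal{M}=(E,\rho)$ be a $q$-matroid, $l=\dim\mathrm{cl}(0)$ and $f=\dim E-l$. Then $\mathcal{Z}(\mathcal{M})=\{\mathrm{cl}(0)\}$ if and only if $\mathcal{M}\approx\mathcal{U}_{0,l}\oplus\mathcal{U}_{f,f}$. In particular, $\mathcal{M}$ has exactly one cyclic flat if and only if it is (equivalent to) the direct sum of a trivial and a free $q$-matroid.
   Context: Let $\mathbb{F}=\mathbb{F}_q$. A $q$-matroid is $\mathcal{M}=(E,\rho)$, $E$ a finite-dimensional $\mathbb{F}$-vector space, $\rho$ from subspaces to $\mathbb{Z}_{\ge0}$ with $0\le\rho(V)\le\dim V$, monotone and submodular. Flat: $\rho(F+\langle x\rangle)>\rho(F)$ for all $x\notin F$. Closure: $\mathrm{cl}(V)=\sum\{\langle x\rangle:\rho(V+\langle x\rangle)=\rho(V)\}$. Cyclic core: $\mathrm{cyc}(V)=\{x\in V\mid\rho(W)=\rho(V)\text{ for all }W\le V\text{ with }W+\langle x\rangle=V\}$; cyclic: $\mathrm{cyc}(V)=V$; $\mathcal{Z}(\mathcal{M})$: the set of cyclic flats. $\mathcal{U}_{0,n}$ (trivial) and $\mathcal{U}_{n,n}$ (free) are the $q$-matroids on an $n$-dimensional space with $\rho\equiv0$, resp. $\rho(V)=\dim V$. Equivalence $\approx$: an $\mathbb{F}$-isomorphism of ground spaces preserving rank. Direct sum: for $E=E_1\oplus E_2$ with projections $\pi_i$, $\mathcal{M}_1\oplus\mathcal{M}_2=(E,\rho)$ where $\rho(V)=\dim V+\min_{X\le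 V}(\rho_1(\pi_1(X))+\rho_2(\pi_2(X))-\dim X)$. *)

theory Defs
  imports Main "HOL.Vector_Spaces" "HOL-Library.Function_Algebras" "HOL-Library.Product_Plus"
begin

definition subsp :: "('a::field \<Rightarrow> 'b::ab_group_add \<Rightarrow> 'b) \<Rightarrow> 'b set \<Rightarrow> 'b set \<Rightarrow> bool" where
  "subsp sc E V \<longleftrightarrow> Modules.module.subspace sc V \<and> V \<subseteq> E"

definition ground_space :: "('a::field \<Rightarrow> 'b::ab_group_add \<Rightarrow> 'b) \<Rightarrow> 'b set \<Rightarrow> bool" where
  "ground_space sc E \<longleftrightarrow> vector_space sc \<and> Modules.module.subspace sc E \<and>
     (\<exists>B. finite B \<and> B \<subseteq> E \<and> Modules.module.span sc B = E)"

text \<open>Sum of subspaces V + W is the span of the union.\<close>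
definition qmatroid :: "('a::{field,finite} \<Rightarrow> 'b::ab_group_add \<Rightarrow> 'b) \<Rightarrow> 'b set \<Rightarrow> ('b set \<Rightarrow> nat) \<Rightarrow> bool" where
  "qmatroid sc E \<rho> \<longleftrightarrow> ground_space sc E \<and>
     (\<forall>V. subsp sc E V \<longrightarrow> \<rho> V \<le> Vector_Spaces.vector_space.dim sc V) \<and>
     (\<forall>V W. subsp sc E V \<and> subsp sc E W \<and> V \<subseteq> W \<longrightarrow> \<rho> V \<le> \<rho> W) \<and>
     (\<forall>V W. subsp sc E V \<and> subsp sc E W \<longrightarrow>
        \<rho> (Modules.module.span sc (V \<union> W)) + \<rho> (V \<inter> W) \<le> \<rho> V + \<rho> W)"

definition qflat :: "('a::field \<Rightarrow> 'b::ab_group_add \<Rightarrow> 'b) \<Rightarrow> 'b set \<Rightarrow> ('b set \<Rightarrow> nat) \<Rightarrow> 'b set \<Rightarrow> bool" where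
  "qflat sc E \<rho> F \<longleftrightarrow> subsp sc E F \<and>
     (\<forall>x \<in> E - F. \<rho> (Modules.module.span sc (F \<union> Modules.module.span sc {x})) > \<rho> F)"

definition qcl :: "('a::field \<Rightarrow> 'b::ab_group_add \<Rightarrow> 'b) \<Rightarrow> 'b set \<Rightarrow> ('b set \<Rightarrow> nat) \<Rightarrow> 'b set \<Rightarrow> 'b set" where
  "qcl sc E \<rho> V = Modules.module.span sc
     (\<Union>{Modules.module.span sc {x} | x. x \<in> E \<and> \<rho> (Modules.module.span sc (V \<union> Modules.module.span sc {x})) = \<rho> V})"

definition qcyc :: "('a::field \<Rightarrow> 'b::ab_group_add \<Rightarrow> 'b) \<Rightarrow> ('b set \<Rightarrow> nat) \<Rightarrow> 'b set \<Rightarrow> 'b set" where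
  "qcyc sc \<rho> V = {x \<in> V. \<forall>W. Modules.module.subspace sc W \<and> W \<subseteq> V \<and>
      Modules.module.span sc (W \<union> Modules.module.span sc {x}) = V \<longrightarrow> \<rho> W = \<rho> V}"

definition qcyclic :: "('a::field \<Rightarrow> 'b::ab_group_add \<Rightarrow> 'b) \<Rightarrow> ('b set \<Rightarrow> nat) \<Rightarrow> 'b set \<Rightarrow> bool" where
  "qcyclic sc \<rho> V \<longleftrightarrow> qcyc sc \<rho> V = V"

definition cyclic_flats :: "('a::field \<Rightarrow> 'b::ab_group_add \<Rightarrow> 'b) \<Rightarrow> 'b set \<Rightarrow> ('b set \<Rightarrow> nat) \<Rightarrow> 'b set set" where
  "cyclic_flats sc E \<rho> = {V. qflat sc E \<rho> V \<and> qcyclic sc \<rho> V}"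

definition qequiv ::
  "('a::field \<Rightarrow> 'b::ab_group_add \<Rightarrow> 'b) \<Rightarrow> 'b set \<Rightarrow> ('b set \<Rightarrow> nat) \<Rightarrow>
   ('a \<Rightarrow> 'c::ab_group_add \<Rightarrow> 'c) \<Rightarrow> 'c set \<Rightarrow> ('c set \<Rightarrow> nat) \<Rightarrow> bool" where
  "qequiv sc1 E1 \<rho>1 sc2 E2 \<rho>2 \<longleftrightarrow> (\<exists>\<phi>. bij_betw \<phi> E1 E2 \<and>
     (\<forall>x\<in>E1. \<forall>y\<in>E1. \<phi> (x + y) = \<phi> x + \<phi> y) \<and>
     (\<forall>c. \<forall>x\<in>E1. \<phi> (sc1 c x) = sc2 c (\<phi> x)) \<and>
     (\<forall>V. subsp sc1 E1 V \<longrightarrow> \<rho>2 (\<phi> ` V) = \<rho>1 V))"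

text \<open>Direct sum, realised on the product type with carrier E1 \<times> E2
(projections fst and snd).\<close>
definition sum_scale :: "('a \<Rightarrow> 'b \<Rightarrow> 'b) \<Rightarrow> ('a \<Rightarrow> 'c \<Rightarrow> 'c) \<Rightarrow> 'a \<Rightarrow> 'b \<times> 'c \<Rightarrow> 'b \<times> 'c" where
  "sum_scale sc1 sc2 c p = (sc1 c (fst p), sc2 c (snd p))"

definition sum_rank ::
  "('a::field \<Rightarrow> 'b::ab_group_add \<Rightarrow> 'b) \<Rightarrow> ('b set \<Rightarrow> nat) \<Rightarrow>
   ('a \<Rightarrow> 'c::ab_group_add \<Rightarrow> 'c) \<Rightarrow> ('c set \<Rightarrow> nat) \<Rightarrow> ('b \<times> 'c) set \<Rightarrow> nat" where
  "sum_rank sc1 \<rho>1 sc2 \<rho>2 V = nat (int (Vector_Spaces.vector_space.dim (sum_scale sc1 sc2) V) +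
     Min ((\<lambda>X. int (\<rho>1 (fst ` X)) + int (\<rho>2 (snd ` X)) - int (Vector_Spaces.vector_space.dim (sum_scale sc1 sc2) X))
          ` {X. Modules.module.subspace (sum_scale sc1 sc2) X \<and> X \<subseteq> V}))"

definition fscale :: "'a::field \<Rightarrow> (nat \<Rightarrow> 'a) \<Rightarrow> (nat \<Rightarrow> 'a)" where
  "fscale c v = (\<lambda>i. c * v i)"

definition Fn :: "nat \<Rightarrow> (nat \<Rightarrow> 'a::field) set" where
  "Fn n = {v. \<forall>i\<ge>n. v i = 0}"

definition rank_trivial :: "(nat \<Rightarrow> 'a::field) set \<Rightarrow> nat" where
  "rank_trivial V = 0"

definition rank_free :: "(nat \<Rightarrow> 'a::field) set \<Rightarrow> nat" where
  "rank_free V = Vector_Spaces.vector_space.dim (fscale :: 'a \<Rightarrow> _) V"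

definition equiv_trivial_plus_free ::
  "('a::field \<Rightarrow> 'b::ab_group_add \<Rightarrow> 'b) \<Rightarrow> 'b set \<Rightarrow> ('b set \<Rightarrow> nat) \<Rightarrow> nat \<Rightarrow> nat \<Rightarrow> bool" where
  "equiv_trivial_plus_free sc E \<rho> l f \<longleftrightarrow>
     qequiv sc E \<rho> (sum_scale (fscale :: 'a \<Rightarrow> _) fscale) (Fn l \<times> Fn f)
       (sum_rank fscale rank_trivial fscale rank_free)"

end

theory Submission
  imports Defs
begin


context vector_space begin

lemma fd_indep_finite: "independent A \<Longrightarrow> A \<subseteq> span B0 \<Longrightarrow> finite B0 \<Longrightarrow> finite A"
  using independent_span_bound by blast

lemma indep_card_le_dim:
  assumes "A \<subseteq> T" "independent A" "T \<subseteq> span B0" "finite B0"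
  shows "card A \<le> dim T"
proof -
  obtain B where B: "A \<subseteq> B" "B \<subseteq> T" "independent B" "T \<subseteq> span B"
    using maximal_independent_subset_extend[OF assms(1,2)] by blast
  have "finite B" using fd_indep_finite[OF B(3)] B(2) assms(3,4) by blast
  have "card B = dim T" using basis_card_eq_dim B by blast
  then show ?thesis using card_mono[OF \<open>finite B\<close> B(1)] by simp
qed

lemma dim_mono':
  assumes "S \<subseteq> T" "T \<subseteq> span B0" "finite B0"
  shows "dim S \<le> dim T"
proof -
  obtain A where A: "A \<subseteq> S" "independent A" "S \<subseteq> span A" "card A = dim S"
    using basis_exists by blast
  show ?thesis using indep_card_le_dim[of A T B0] A assms by auto
qed

lemma span_subspace_basis:
  assumes "A \<subseteq> S" "S \<subseteq> span A" "subspace S"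
  shows "span A = S"
  using assms span_subspace by blast

lemma dim_psub:
  assumes "S \<subseteq> T" "subspace S" "x \<in> T" "x \<notin> S" "T \<subseteq> span B0" "finite B0"
  shows "dim S < dim T"
proof -
  obtain A where A: "A \<subseteq> S" "independent A" "S \<subseteq> span A" "card A = dim S"
    using basis_exists by blast
  have sA: "span A = S" using span_subspace_basis A assms by blast
  have i: "independent (insert x A)" using independent_insertI[of x A] A sA assms by auto
  have fA: "finite A" using fd_indep_finite[OF A(2)] A(1) assms span_mono by blast
  have "card (insert x A) \<le> dim T"
    using indep_card_le_dim[OF _ i assms(5,6)] A assms by auto
  moreover have "x \<notin> A" using A assms by auto
  ultimately show ?thesis using A fA by simp
qed

lemma span_Un_span: "span (A \<union> span C) = span (A \<union> C)"
proof -
  have "A \<union> C \<subseteq> A \<union> span C" using span_superset by blast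
  moreover have "A \<union> span C \<subseteq> span (A \<union> C)"
    using span_superset span_mono[of C "A \<union> C"] by blast
  ultimately show ?thesis using span_mono span_span by (metis subset_antisym span_minimal subspace_span)
qed

lemma dim_insert_le:
  assumes "subspace V" "V \<subseteq> span B0" "finite B0"
  shows "dim (span (V \<union> span {x})) \<le> dim V + 1"
    and "x \<notin> V \<Longrightarrow> dim (span (V \<union> span {x})) = dim V + 1"
proof -
  obtain A where A: "A \<subseteq> V" "independent A" "V \<subseteq> span A" "card A = dim V"
    using basis_exists by blast
  have sA: "span A = V" using span_subspace_basis A assms by blast
  have fA: "finite A" using fd_indep_finite[OF A(2)] A(1) assms span_mono by blast
  have eq: "span (V \<union> span {x}) = span (insert x A)"
    using span_Un_span[of V "{x}"] sA span_Un_span[of "{x}" A]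
    by (metis Un_commute insert_is_Un)
  show "dim (span (V \<union> span {x})) \<le> dim V + 1"
    unfolding eq dim_span using dim_le_card'[of "insert x A"] fA A
    by (cases "x \<in> A") (auto simp: card_insert_if)
  assume "x \<notin> V"
  then have i: "independent (insert x A)" using independent_insertI[of x A] A sA by auto
  have "x \<notin> A" using A \<open>x \<notin> V\<close> by auto
  then show "dim (span (V \<union> span {x})) = dim V + 1"
    unfolding eq dim_span dim_eq_card_independent[OF i] using fA A by simp
qed

lemma span_disjoint:
  assumes "independent B" "A \<subseteq> B" "C \<subseteq> B" "A \<inter> C = {}" "x \<in> span A" "x \<in> span C"
  shows "x = 0"
proof -
  have r1: "representation B x = representation A x" using representation_extend assms by blast
  have r2: "representation B x = representation C x" using representation_extend assms by blast
  have z: "representation B x = (\<lambda>b. 0)"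
  proof
    fix b
    show "representation B x b = 0"
    proof (rule ccontr)
      assume "representation B x b \<noteq> 0"
      then have "b \<in> A" "b \<in> C" using r1 r2 representation_ne_zero by metis+
      then show False using assms by blast
    qed
  qed
  have "x \<in> span B" using assms span_mono by blast
  then have "(\<Sum>b | representation B x b \<noteq> 0. representation B x b *s b) = x"
    using sum_nonzero_representation_eq assms by blast
  then show ?thesis using z by simp
qed

lemma indep_Un:
  assumes "finite T" "independent S" "independent T" "\<And>x. x \<in> span S \<Longrightarrow> x \<in> span T \<Longrightarrow> x = 0"
  shows "independent (S \<union> T)"
  using assms
proof (induction T rule: finite_induct)
  case empty
  then show ?case by simp
next
  case (insert t T)
  have iT: "independent T" using insert.prems independent_mono by blast
  have IH: "independent (S \<union> T)"
    using insert.IH[OF insert.prems(1) iT] insert.prems(3) span_mono[of T "insert t T"] by blast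
  have "t \<notin> span (S \<union> T)"
  proof
    assume "t \<in> span (S \<union> T)"
    then obtain a b where ab: "t = a + b" "a \<in> span S" "b \<in> span T" using span_Un by blast
    have "a \<in> span (insert t T)"
    proof -
      have "a = t - b" using ab by simp
      moreover have "t \<in> span (insert t T)" by (simp add: span_base)
      moreover have "b \<in> span (insert t T)" using ab span_mono[of T "insert t T"] by blast
      ultimately show ?thesis using span_diff by simp
    qed
    then have "a = 0" using insert.prems ab by blast
    then have "t \<in> span T" using ab by simp
    then show False using insert.prems(2) insert.hyps dependent_def
      by (metis Diff_insert_absorb insertI1)
  qed
  then have "independent (insert t (S \<union> T))" using independent_insertI IH by blast
  then show ?case by simp
qed

lemma dim_modular_ge:
  assumes W: "subspace W" and L: "subspace L" and fd: "W \<subseteq> span B0" "L \<subseteq> span B0" "finite B0"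
  shows "dim W + dim L \<le> dim (span (W \<union> L)) + dim (W \<inter> L)"
proof -
  obtain C where C: "C \<subseteq> W \<inter> L" "independent C" "W \<inter> L \<subseteq> span C" "card C = dim (W \<inter> L)"
    using basis_exists by blast
  obtain BW where BW: "C \<subseteq> BW" "BW \<subseteq> W" "independent BW" "W \<subseteq> span BW"
    using maximal_independent_subset_extend[of C W] C by blast
  obtain BL where BL: "C \<subseteq> BL" "BL \<subseteq> L" "independent BL" "L \<subseteq> span BL"
    using maximal_independent_subset_extend[of C L] C by blast
  have fBW: "finite BW" using fd_indep_finite[OF BW(3)] BW(2) fd by blast
  have fBL: "finite BL" using fd_indep_finite[OF BL(3)] BL(2) fd by blast
  have sBW: "span BW = W" using span_subspace_basis BW W by blast
  have sBL: "span BL = L" using span_subspace_basis BL L by blast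
  have cW: "card BW = dim W" using basis_card_eq_dim BW by blast
  have cL: "card BL = dim L" using basis_card_eq_dim BL by blast
  have disj: "x = 0" if "x \<in> span BW" "x \<in> span (BL - C)" for x
  proof -
    have "x \<in> L" using that span_mono[of "BL - C" BL] sBL by blast
    then have "x \<in> span C" using that sBW C by blast
    then show ?thesis using span_disjoint[OF BL(3), of C "BL - C" x] BL that by blast
  qed
  have iU: "independent (BW \<union> (BL - C))"
    using indep_Un[of "BL - C" BW] fBL BW BL independent_mono disj by blast
  have d: "BW \<inter> (BL - C) = {}"
  proof (rule ccontr)
    assume "BW \<inter> (BL - C) \<noteq> {}"
    then obtain y where y: "y \<in> BW" "y \<in> BL - C" by blast
    then have "y = 0" using disj span_base by blast
    then show False using y BW(3) dependent_zero by blast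
  qed
  have "card (BW \<union> (BL - C)) = card BW + (card BL - card C)"
    using card_Un_disjoint[OF fBW _ d] fBL card_Diff_subset[OF _ BL(1)] finite_subset[OF BL(1) fBL]
    by simp
  moreover have "card (BW \<union> (BL - C)) \<le> dim (span (W \<union> L))"
  proof (rule indep_card_le_dim[OF _ iU, of _ B0])
    show "BW \<union> (BL - C) \<subseteq> span (W \<union> L)" using BW BL span_superset by blast
    show "span (W \<union> L) \<subseteq> span B0" using fd span_minimal[of "W \<union> L" "span B0"] by simp
  qed (rule fd(3))
  moreover have "card C \<le> card BL" using card_mono[OF fBL BL(1)] .
  ultimately show ?thesis using cW cL C by linarith
qed

end

context vector_space_pair begin

lemma rank_nullity:
  assumes h: "Vector_Spaces.linear s1 s2 h" and X: "vs1.subspace X" and fd: "X \<subseteq> vs1.span B0" "finite B0"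
  shows "vs1.dim X = vs2.dim (h ` X) + vs1.dim (X \<inter> {x. h x = 0})"
proof -
  let ?K = "X \<inter> {x. h x = 0}"
  have sK: "vs1.subspace ?K" using vs1.subspace_inter[OF X linear_subspace_kernel[OF h]] .
  obtain Kb where Kb: "Kb \<subseteq> ?K" "vs1.independent Kb" "?K \<subseteq> vs1.span Kb" "card Kb = vs1.dim ?K"
    using vs1.basis_exists by blast
  obtain B where B: "Kb \<subseteq> B" "B \<subseteq> X" "vs1.independent B" "X \<subseteq> vs1.span B"
    using vs1.maximal_independent_subset_extend[of Kb X] Kb(1,2) by auto
  have fB: "finite B" using vs1.fd_indep_finite[OF B(3) order_trans[OF B(2) fd(1)] fd(2)] .
  have sB: "vs1.span B = X" using vs1.span_subspace_basis[OF B(2) B(4) X] .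
  have cB: "card B = vs1.dim X" using vs1.basis_card_eq_dim B by blast
  define A where "A = B - Kb"
  have AB: "A \<subseteq> B" and AK: "Kb \<inter> A = {}" unfolding A_def by auto
  have hX: "h ` X = vs2.span (h ` A)"
  proof -
    have "h ` X = vs2.span (h ` B)" unfolding sB[symmetric] by (rule linear_span_image[OF h, symmetric])
    also have "vs2.span (h ` B) = vs2.span (h ` A)"
    proof -
      have "h ` B \<subseteq> insert 0 (h ` A)"
      proof
        fix y assume "y \<in> h ` B"
        then obtain b where b: "b \<in> B" "y = h b" by blast
        show "y \<in> insert 0 (h ` A)"
        proof (cases "b \<in> Kb")
          case True then have "h b = 0" using Kb(1) by blast
          then show ?thesis using b by simp
        next
          case False then show ?thesis using b unfolding A_def by blast
        qed
      qed
      moreover have "insert 0 (h ` A) \<subseteq> vs2.span (h ` A)" by (simp add: vs2.span_superset vs2.span_zero)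
      ultimately have c1: "h ` B \<subseteq> vs2.span (h ` A)" by (rule order_trans)
      have c2: "h ` A \<subseteq> vs2.span (h ` B)" using image_mono[OF AB] vs2.span_superset[of "h ` B"] by (rule order_trans)
      show ?thesis using vs2.span_eq[of "h ` B" "h ` A"] c1 c2 by blast
    qed
    finally show ?thesis .
  qed
  have inj: "inj_on h (vs1.span A)"
    unfolding linear_inj_on_iff_eq_0[OF h vs1.subspace_span]
  proof (intro ballI impI)
    fix x assume x: "x \<in> vs1.span A" "h x = 0"
    have "x \<in> X" using x(1) vs1.span_mono[OF AB] sB by blast
    then have "x \<in> vs1.span Kb" using x Kb by blast
    then show "x = 0" using vs1.span_disjoint[OF B(3) B(1) AB AK _ x(1)] by blast
  qed
  have iA: "vs2.independent (h ` A)"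
    using linear_independent_injective_image[OF h vs1.independent_mono[OF B(3) AB] inj] .
  have cA: "card (h ` A) = card A"
    using card_image[OF inj_on_subset[OF inj vs1.span_superset]] .
  have "vs2.dim (h ` X) = card A" using hX vs2.dim_span_eq_card_independent[OF iA] cA by simp
  moreover have "card A = card B - card Kb" using A_def card_Diff_subset[OF _ B(1)] finite_subset[OF B(1) fB] by simp
  moreover have "card Kb \<le> card B" using card_mono[OF fB B(1)] .
  ultimately show ?thesis using cB Kb by linarith
qed

lemma dim_image_inj:
  assumes h: "Vector_Spaces.linear s1 s2 h" and inj: "inj_on h V" and V: "vs1.subspace V"
  shows "vs2.dim (h ` V) = vs1.dim V"
proof -
  obtain A where A: "A \<subseteq> V" "vs1.independent A" "V \<subseteq> vs1.span A" "card A = vs1.dim V"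
    using vs1.basis_exists by blast
  have sA: "vs1.span A = V" using vs1.span_subspace_basis A V by blast
  have hV: "h ` V = vs2.span (h ` A)" using linear_span_image[OF h, of A] sA by simp
  have iA: "vs2.independent (h ` A)"
    using linear_independent_injective_image[OF h A(2)] inj sA by simp
  have "card (h ` A) = card A" using card_image inj_on_subset[OF inj A(1)] by blast
  then show ?thesis using hV vs2.dim_span_eq_card_independent[OF iA] A by simp
qed

end

lemma sum_fun_apply: "(\<Sum>x\<in>A. f x) i = (\<Sum>x\<in>A. f x i)"
  by (induction A rule: infinite_finite_induct) (auto simp: zero_fun_def)

lemma vs_fscale: "vector_space (fscale :: 'a::field \<Rightarrow> (nat \<Rightarrow> 'a) \<Rightarrow> _)"
  by unfold_locales (auto simp: fscale_def fun_eq_iff algebra_simps)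

lemma vs_sum_scale:
  assumes "vector_space s1" "vector_space s2"
  shows "vector_space (sum_scale s1 s2)"
proof -
  interpret a: vector_space s1 by fact
  interpret b: vector_space s2 by fact
  show ?thesis
  proof
    fix a b :: 'a and x y :: "'b \<times> 'c"
    show "sum_scale s1 s2 a (x + y) = sum_scale s1 s2 a x + sum_scale s1 s2 a y"
      by (simp add: sum_scale_def a.scale_right_distrib b.scale_right_distrib)
    show "sum_scale s1 s2 (a + b) x = sum_scale s1 s2 a x + sum_scale s1 s2 b x"
      by (simp add: sum_scale_def a.scale_left_distrib b.scale_left_distrib)
    show "sum_scale s1 s2 a (sum_scale s1 s2 b x) = sum_scale s1 s2 (a * b) x"
      by (simp add: sum_scale_def)
    show "sum_scale s1 s2 1 x = x"
      by (simp add: sum_scale_def)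
  qed
qed

abbreviation ss :: "'a::field \<Rightarrow> (nat \<Rightarrow> 'a) \<times> (nat \<Rightarrow> 'a) \<Rightarrow> (nat \<Rightarrow> 'a) \<times> (nat \<Rightarrow> 'a)"
  where "ss \<equiv> sum_scale fscale fscale"

lemma vs_ss: "vector_space (ss :: 'a::field \<Rightarrow> _)"
  by (rule vs_sum_scale[OF vs_fscale vs_fscale])

lemma linear_snd: "Vector_Spaces.linear (ss :: 'a::field \<Rightarrow> _) fscale snd"
  using vs_ss vs_fscale unfolding linear_iff by (auto simp: sum_scale_def)

lemma finite_Fn: "finite (Fn n :: (nat \<Rightarrow> 'a::{field,finite}) set)"
proof (induction n)
  case 0
  have "Fn 0 = {(\<lambda>i. 0) :: nat \<Rightarrow> 'a}" by (auto simp: Fn_def)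
  then show ?case by simp
next
  case (Suc n)
  have "Fn (Suc n) \<subseteq> (\<lambda>(v, c). v(n := c)) ` (Fn n \<times> (UNIV :: 'a set))"
  proof
    fix v :: "nat \<Rightarrow> 'a" assume v: "v \<in> Fn (Suc n)"
    have "v = (\<lambda>(v, c). v(n := c)) (v(n := 0), v n)" by auto
    moreover have "v(n := 0) \<in> Fn n" using v by (auto simp: Fn_def)
    ultimately show "v \<in> (\<lambda>(v, c). v(n := c)) ` (Fn n \<times> (UNIV :: 'a set))" by blast
  qed
  moreover have "finite ((\<lambda>(v, c). v(n := c)) ` (Fn n \<times> (UNIV :: 'a set)))"
    using Suc by simp
  ultimately show ?case by (rule finite_subset)
qed

lemma Fn_0: "Fn 0 = {0}"
  by (auto simp: Fn_def fun_eq_iff)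

lemma subspace_Fn: "module.subspace (fscale :: 'a::field \<Rightarrow> _) (Fn n)"
proof -
  interpret vector_space "fscale :: 'a \<Rightarrow> _" by (rule vs_fscale)
  show ?thesis unfolding subspace_def by (auto simp: Fn_def fscale_def)
qed

lemma subspace_FnFn: "module.subspace (ss :: 'a::field \<Rightarrow> _) (Fn a \<times> Fn b)"
proof -
  interpret vector_space "ss :: 'a \<Rightarrow> _" by (rule vs_ss)
  show ?thesis unfolding subspace_def by (auto simp: Fn_def fscale_def sum_scale_def zero_prod_def)
qed

lemma sum_rank_formula:
  fixes W :: "((nat \<Rightarrow> 'a::{field,finite}) \<times> (nat \<Rightarrow> 'a)) set"
  assumes W: "finite W" "module.subspace (ss :: 'a \<Rightarrow> _) W"
  shows "sum_rank fscale rank_trivial fscale rank_free W =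
    vector_space.dim (ss :: 'a \<Rightarrow> _) W - vector_space.dim (ss :: 'a \<Rightarrow> _) (W \<inter> {p. snd p = 0})"
proof -
  interpret p: vector_space_pair "ss :: 'a \<Rightarrow> _" "fscale :: 'a \<Rightarrow> _"
    unfolding vector_space_pair_def using vs_ss vs_fscale by blast
  let ?K = "{p :: (nat \<Rightarrow> 'a) \<times> (nat \<Rightarrow> 'a). snd p = 0}"
  let ?S = "{X. p.vs1.subspace X \<and> X \<subseteq> W}"
  let ?g = "\<lambda>X. int (rank_trivial (fst ` X)) + int (rank_free (snd ` X)) - int (p.vs1.dim X)"
  have g: "?g X = - int (p.vs1.dim (X \<inter> ?K))" if "X \<in> ?S" for X
  proof -
    have "p.vs1.dim X = p.vs2.dim (snd ` X) + p.vs1.dim (X \<inter> ?K)"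
      using p.rank_nullity[OF linear_snd, of X W] that p.vs1.span_superset[of W] W by auto
    then show ?thesis by (simp add: rank_trivial_def rank_free_def)
  qed
  have fS: "finite ?S" using W(1) by (rule finite_subset[rotated, OF finite_Pow_iff[THEN iffD2]]) auto
  have "Min (?g ` ?S) = - int (p.vs1.dim (W \<inter> ?K))"
  proof (rule Min_eqI)
    show "finite (?g ` ?S)" using fS by simp
    show "- int (p.vs1.dim (W \<inter> ?K)) \<in> ?g ` ?S"
      using g[of W] W by (intro image_eqI[of _ _ W]) auto
    fix y assume "y \<in> ?g ` ?S"
    then obtain X where X: "X \<in> ?S" "y = ?g X" by blast
    have "p.vs1.dim (X \<inter> ?K) \<le> p.vs1.dim (W \<inter> ?K)"
      using p.vs1.dim_mono'[of "X \<inter> ?K" "W \<inter> ?K" W] X p.vs1.span_superset[of W] W by auto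
    then show "- int (p.vs1.dim (W \<inter> ?K)) \<le> y" using X g by simp
  qed
  moreover have "p.vs1.dim (W \<inter> ?K) \<le> p.vs1.dim W"
    using p.vs1.dim_mono'[of "W \<inter> ?K" "W" W] p.vs1.span_superset[of W] W by auto
  moreover have "sum_rank fscale rank_trivial fscale rank_free W = nat (int (p.vs1.dim W) + Min (?g ` ?S))"
    unfolding sum_rank_def by (rule refl)
  ultimately show ?thesis by linarith
qed


lemma mult_if01: "(a::'a::field) * (if P then 1 else 0) = (if P then a else 0)"
  by simp

definition delta :: "nat \<Rightarrow> nat \<Rightarrow> 'a::field" where
  "delta i = (\<lambda>j. if j = i then 1 else 0)"

definition stdU :: "nat \<Rightarrow> nat \<Rightarrow> ((nat \<Rightarrow> 'a::field) \<times> (nat \<Rightarrow> 'a)) set" where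
  "stdU l f = (\<lambda>i. (delta i, 0)) ` {..<l} \<union> (\<lambda>j. (0, delta j)) ` {..<f}"

lemma finite_stdU: "finite (stdU l f)"
  unfolding stdU_def by simp

lemma stdU_sub: "stdU l f \<subseteq> Fn l \<times> Fn f"
  unfolding stdU_def by (auto simp: Fn_def delta_def)

lemma std_span: "module.span (ss :: 'a::field \<Rightarrow> _) (stdU l f) = Fn l \<times> Fn f"
proof -
  interpret vector_space "ss :: 'a \<Rightarrow> _" by (rule vs_ss)
  show ?thesis
  proof
    show "span (stdU l f) \<subseteq> Fn l \<times> Fn f"
      using span_minimal[OF stdU_sub subspace_FnFn] .
    show "Fn l \<times> Fn f \<subseteq> span (stdU l f)"
    proof
      fix p :: "(nat \<Rightarrow> 'a) \<times> (nat \<Rightarrow> 'a)" assume p: "p \<in> Fn l \<times> Fn f"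
      obtain v w where vw: "p = (v, w)" by (cases p)
      have v: "\<And>k. k \<ge> l \<Longrightarrow> v k = 0" and w: "\<And>k. k \<ge> f \<Longrightarrow> w k = 0"
        using p vw by (auto simp: Fn_def)
      have eq: "p = (\<Sum>i<l. ss (v i) (delta i, 0)) + (\<Sum>j<f. ss (w j) (0, delta j))"
      proof -
        have "fst ((\<Sum>i<l. ss (v i) (delta i, 0)) + (\<Sum>j<f. ss (w j) (0, delta j))) k = v k" for k
          using v[of k] by (auto simp: fst_sum snd_sum sum_fun_apply sum_scale_def fscale_def delta_def
              zero_fun_def mult_if01 cong: if_cong)
        moreover have "snd ((\<Sum>i<l. ss (v i) (delta i, 0)) + (\<Sum>j<f. ss (w j) (0, delta j))) k = w k" for k
          using w[of k] by (auto simp: fst_sum snd_sum sum_fun_apply sum_scale_def fscale_def delta_def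
              zero_fun_def mult_if01 cong: if_cong)
        ultimately show ?thesis using vw by (auto simp: prod_eq_iff fun_eq_iff)
      qed
      have "(\<Sum>i<l. ss (v i) (delta i, 0)) \<in> span (stdU l f)"
        by (intro span_sum span_scale span_base) (auto simp: stdU_def)
      moreover have "(\<Sum>j<f. ss (w j) (0, delta j)) \<in> span (stdU l f)"
        by (intro span_sum span_scale span_base) (auto simp: stdU_def)
      ultimately show "p \<in> span (stdU l f)" using eq span_add by simp
    qed
  qed
qed


lemma delta_eq_iff: "(delta i :: nat \<Rightarrow> 'a::field) = delta k \<longleftrightarrow> i = k"
  unfolding delta_def fun_eq_iff by (metis one_neq_zero)

lemma delta_ne0: "(delta i :: nat \<Rightarrow> 'a::field) \<noteq> 0"
  unfolding delta_def fun_eq_iff zero_fun_def by (metis one_neq_zero)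

lemma std_indep: "module.independent (ss :: 'a::field \<Rightarrow> _) (stdU l f)"
proof -
  interpret vector_space "ss :: 'a \<Rightarrow> _" by (rule vs_ss)
  show ?thesis
  proof (rule independent_if_scalars_zero[OF finite_stdU])
    fix c :: "(nat \<Rightarrow> 'a) \<times> (nat \<Rightarrow> 'a) \<Rightarrow> 'a" and x :: "(nat \<Rightarrow> 'a) \<times> (nat \<Rightarrow> 'a)"
    assume s: "(\<Sum>x\<in>stdU l f. ss (c x) x) = 0" and x: "x \<in> stdU l f"
    from x consider (a) i where "i < l" "x = (delta i, 0)" | (b) j where "j < f" "x = (0, delta j)"
      unfolding stdU_def by blast
    then show "c x = 0"
    proof cases
      case a
      have fy: "fst y i = (if y = x then 1 else 0)" if "y \<in> stdU l f" for y
        using that a delta_ne0[of i] unfolding stdU_def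
        by (auto simp: delta_eq_iff) (auto simp: delta_def)
      have "0 = fst (\<Sum>y\<in>stdU l f. ss (c y) y) i" using s by (simp add: zero_fun_def)
      also have "\<dots> = (\<Sum>y\<in>stdU l f. c y * fst y i)"
        by (simp add: fst_sum sum_fun_apply sum_scale_def fscale_def)
      also have "\<dots> = (\<Sum>y\<in>stdU l f. if y = x then c y else 0)"
        by (rule sum.cong) (auto simp: fy)
      also have "\<dots> = c x" using x by (simp add: sum.delta[OF finite_stdU])
      finally show ?thesis by simp
    next
      case b
      have fy: "snd y j = (if y = x then 1 else 0)" if "y \<in> stdU l f" for y
        using that b delta_ne0[of j] unfolding stdU_def
        by (auto simp: delta_eq_iff) (auto simp: delta_def)
      have "0 = snd (\<Sum>y\<in>stdU l f. ss (c y) y) j" using s by (simp add: zero_fun_def)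
      also have "\<dots> = (\<Sum>y\<in>stdU l f. c y * snd y j)"
        by (simp add: snd_sum sum_fun_apply sum_scale_def fscale_def)
      also have "\<dots> = (\<Sum>y\<in>stdU l f. if y = x then c y else 0)"
        by (rule sum.cong) (auto simp: fy)
      also have "\<dots> = c x" using x by (simp add: sum.delta[OF finite_stdU])
      finally show ?thesis by simp
    qed
  qed
qed




locale qm = vector_space sc for sc :: "'a::{field,finite} \<Rightarrow> 'b::ab_group_add \<Rightarrow> 'b" +
  fixes E :: "'b set" and \<rho> :: "'b set \<Rightarrow> nat"
  assumes qm: "qmatroid sc E \<rho>"
begin

abbreviation SS :: "'b set \<Rightarrow> bool" where "SS V \<equiv> subspace V \<and> V \<subseteq> E"

lemma subsp_iff: "subsp sc E V \<longleftrightarrow> SS V"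
  unfolding subsp_def by simp

lemma subspE: "subspace E"
  using qm unfolding qmatroid_def ground_space_def by blast

lemma fdE: obtains B0 where "finite B0" "span B0 = E"
  using qm unfolding qmatroid_def ground_space_def by blast

definition B0 where "B0 = (SOME B. finite B \<and> span B = E)"

lemma B0: "finite B0" "span B0 = E"
proof -
  obtain B where "finite B" "span B = E" using fdE by blast
  then have "finite B0 \<and> span B0 = E" unfolding B0_def by (rule someI[of "\<lambda>B. finite B \<and> span B = E", OF conjI])
  then show "finite B0" "span B0 = E" by auto
qed

lemma fd: "V \<subseteq> E \<Longrightarrow> V \<subseteq> span B0"
  using B0 by simp

lemma rk_le: "SS V \<Longrightarrow> \<rho> V \<le> dim V"
  using qm unfolding qmatroid_def subsp_iff by blast

lemma rk_mono: "SS V \<Longrightarrow> SS W \<Longrightarrow> V \<subseteq> W \<Longrightarrow> \<rho> V \<le> \<rho> W"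
  using qm unfolding qmatroid_def subsp_iff by blast

lemma submod: "SS V \<Longrightarrow> SS W \<Longrightarrow> \<rho> (span (V \<union> W)) + \<rho> (V \<inter> W) \<le> \<rho> V + \<rho> W"
  using qm unfolding qmatroid_def subsp_iff by blast

lemma SS_span: "A \<subseteq> E \<Longrightarrow> SS (span A)"
  using span_minimal[OF _ subspE] by auto

lemma SS_int: "SS V \<Longrightarrow> SS W \<Longrightarrow> SS (V \<inter> W)"
  using subspace_inter by blast

lemma SS_0: "SS {0}"
  using subspE subspace_0 by auto

lemma dim_0: "dim {0} = 0"
  using dim_eq_card[of "{}" "{0}"] independent_empty by simp

lemma rk_0: "\<rho> {0} = 0"
  using rk_le[OF SS_0] dim_0 by simp

lemma span_single_sub: "x \<in> E \<Longrightarrow> span {x} \<subseteq> E"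
  using span_minimal[OF _ subspE] by auto

lemma dim_single_le: "dim (span {x}) \<le> 1"
  using dim_le_card'[of "{x}"] by simp

lemma R1: assumes "SS V" "x \<in> E" shows "\<rho> (span (V \<union> span {x})) \<le> \<rho> V + 1"
proof -
  have "SS (span {x})" using SS_span[of "{x}"] assms by auto
  then have "\<rho> (span (V \<union> span {x})) + \<rho> (V \<inter> span {x}) \<le> \<rho> V + \<rho> (span {x})"
    using submod assms by blast
  moreover have "\<rho> (span {x}) \<le> 1" using rk_le[OF \<open>SS (span {x})\<close>] dim_single_le[of x] by linarith
  ultimately show ?thesis by linarith
qed

lemma SS_ext: "SS V \<Longrightarrow> x \<in> E \<Longrightarrow> SS (span (V \<union> span {x}))"
  using SS_span[of "V \<union> span {x}"] span_single_sub by auto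

lemma Nmono: "SS V \<Longrightarrow> SS W \<Longrightarrow> V \<subseteq> W \<Longrightarrow> \<rho> W + dim V \<le> \<rho> V + dim W"
proof (induction "dim W - dim V" arbitrary: V rule: less_induct)
  case less
  show ?case
  proof (cases "V = W")
    case True then show ?thesis by simp
  next
    case False
    then obtain x where x: "x \<in> W" "x \<notin> V" using less.prems by blast
    define V' where "V' = span (V \<union> span {x})"
    have xE: "x \<in> E" using x less.prems by blast
    have SV': "SS V'" unfolding V'_def using SS_ext less.prems xE by blast
    have V'W: "V' \<subseteq> W" unfolding V'_def
      using span_minimal[of "V \<union> span {x}" W] span_minimal[of "{x}" W] x less.prems by blast
    have dV': "dim V' = dim V + 1" unfolding V'_def
      using dim_insert_le(2)[of V B0 x] less.prems fd B0 x by blast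
    have "dim V' \<le> dim W" using dim_mono'[OF V'W fd B0(1)] less.prems by blast
    then have "\<rho> W + dim V' \<le> \<rho> V' + dim W"
      using less.hyps[of V'] dV' SV' V'W less.prems by simp
    moreover have "\<rho> V' \<le> \<rho> V + 1" unfolding V'_def using R1 less.prems xE by blast
    moreover have "V \<subseteq> V'" unfolding V'_def using span_superset by blast
    ultimately show ?thesis using dV' by linarith
  qed
qed


lemma loops_rk0: "finite A \<Longrightarrow> A \<subseteq> E \<Longrightarrow> \<forall>a\<in>A. \<rho> (span {a}) = 0 \<Longrightarrow> \<rho> (span A) = 0"
proof (induction A rule: finite_induct)
  case empty
  then show ?case using rk_0 by simp
next
  case (insert a A)
  have eq: "span (insert a A) = span (span A \<union> span {a})"
    using span_Un_span[of "span A" "{a}"] span_Un_span[of "{a}" A]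
    by (metis Un_commute insert_is_Un)
  have "\<rho> (span (span A \<union> span {a})) + \<rho> (span A \<inter> span {a}) \<le> \<rho> (span A) + \<rho> (span {a})"
    using submod[OF SS_span[of A] SS_span[of "{a}"]] insert.prems by auto
  then show ?case using eq insert by simp
qed

definition Lp where "Lp = {x \<in> E. \<rho> (span {x}) = 0}"

abbreviation L0 where "L0 \<equiv> qcl sc E \<rho> {0}"

lemma L0_eq: "L0 = span Lp"
proof -
  have e: "span ({0} \<union> span {x}) = span {x}" for x
    by (simp add: span_span)
  have "\<Union>{span {x} |x. x \<in> E \<and> \<rho> (span ({0} \<union> span {x})) = \<rho> {0}} = Lp"
  proof
    show "\<Union>{span {x} |x. x \<in> E \<and> \<rho> (span ({0} \<union> span {x})) = \<rho> {0}} \<subseteq> Lp"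
    proof
      fix y assume "y \<in> \<Union>{span {x} |x. x \<in> E \<and> \<rho> (span ({0} \<union> span {x})) = \<rho> {0}}"
      then obtain x where x: "x \<in> E" "\<rho> (span {x}) = 0" "y \<in> span {x}" using e rk_0 by (auto simp: span_span)
      have yE: "y \<in> E" using x span_single_sub by blast
      have "span {y} \<subseteq> span {x}" using x span_minimal[of "{y}" "span {x}"] by simp
      then have "\<rho> (span {y}) \<le> \<rho> (span {x})"
        using rk_mono[OF SS_span[of "{y}"] SS_span[of "{x}"]] yE x by auto
      then show "y \<in> Lp" using x yE unfolding Lp_def by simp
    qed
    show "Lp \<subseteq> \<Union>{span {x} |x. x \<in> E \<and> \<rho> (span ({0} \<union> span {x})) = \<rho> {0}}"
    proof
      fix x assume x: "x \<in> Lp"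
      then have "span {x} \<in> {span {x} |x. x \<in> E \<and> \<rho> (span ({0} \<union> span {x})) = \<rho> {0}}"
        unfolding Lp_def e rk_0 by blast
      moreover have "x \<in> span {x}" by (rule span_base) simp
      ultimately show "x \<in> \<Union>{span {x} |x. x \<in> E \<and> \<rho> (span ({0} \<union> span {x})) = \<rho> {0}}" by blast
    qed
  qed
  then show ?thesis unfolding qcl_def by simp
qed

lemma Lp_E: "Lp \<subseteq> E" unfolding Lp_def by auto

lemma SS_L0: "SS L0" unfolding L0_eq using SS_span Lp_E by blast

lemma rk_L0: "\<rho> L0 = 0"
proof -
  obtain A where A: "A \<subseteq> Lp" "independent A" "Lp \<subseteq> span A"
    using maximal_independent_subset by blast
  have fA: "finite A" using fd_indep_finite[OF A(2)] A(1) Lp_E fd B0 by blast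
  have "span A = span Lp" unfolding span_eq using A span_superset by blast
  moreover have "\<rho> (span A) = 0" using loops_rk0[OF fA] A Lp_E unfolding Lp_def by auto
  ultimately show ?thesis using L0_eq by simp
qed

lemma L0_in_Z: "L0 \<in> cyclic_flats sc E \<rho>"
proof -
  have flat: "qflat sc E \<rho> L0"
    unfolding qflat_def subsp_iff
  proof (intro conjI SS_L0[THEN conjunct1] SS_L0[THEN conjunct2] ballI)
    fix x assume x: "x \<in> E - L0"
    then have xE: "x \<in> E" by blast
    show "\<rho> L0 < \<rho> (span (L0 \<union> span {x}))"
    proof (rule ccontr)
      assume "\<not> ?thesis"
      then have z: "\<rho> (span (L0 \<union> span {x})) = 0" using rk_L0 by simp
      have sub: "span {x} \<subseteq> span (L0 \<union> span {x})" using span_superset by blast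
      have "\<rho> (span {x}) \<le> \<rho> (span (L0 \<union> span {x}))"
        using rk_mono[OF SS_span[of "{x}"] SS_ext[OF SS_L0 xE] sub] xE by simp
      then have "x \<in> Lp" using z xE unfolding Lp_def by simp
      then show False using x L0_eq span_base by blast
    qed
  qed
  have cyc: "qcyc sc \<rho> L0 = L0"
  proof
    show "qcyc sc \<rho> L0 \<subseteq> L0" unfolding qcyc_def by blast
    show "L0 \<subseteq> qcyc sc \<rho> L0"
    proof
      fix x assume x: "x \<in> L0"
      have "\<rho> W = \<rho> L0" if W: "subspace W" "W \<subseteq> L0" for W
      proof -
        have "SS W" using W SS_L0 by blast
        then have "\<rho> W \<le> \<rho> L0" using rk_mono[OF _ SS_L0 W(2)] by blast
        then show ?thesis using rk_L0 by simp
      qed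
      then show "x \<in> qcyc sc \<rho> L0" unfolding qcyc_def using x by blast
    qed
  qed
  show ?thesis unfolding cyclic_flats_def qcyclic_def using flat cyc by blast
qed


lemma dimE_ge: "SS V \<Longrightarrow> dim V \<le> dim E"
  using dim_mono'[of V E B0] fd B0 by blast

lemma nmax: "SS W \<Longrightarrow> dim W - \<rho> W \<le> dim E - \<rho> E"
  using Nmono[of W E] subspE rk_le[of W] rk_le[of E] subspE by auto

lemma main_B:
  assumes Z: "cyclic_flats sc E \<rho> = {L0}"
  shows "SS W \<Longrightarrow> \<rho> W = dim W - dim (W \<inter> L0)"
proof -
  define N where "N = dim E - \<rho> E"
  define P where "P V \<longleftrightarrow> SS V \<and> dim V - \<rho> V = N" for V
  have "P E" unfolding P_def N_def using subspE by blast
  then obtain V where V: "P V" and minV: "\<And>W. P W \<Longrightarrow> dim V \<le> dim W"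
    using ex_has_least_nat[of P E dim] by blast
  have SV: "SS V" and nV: "dim V - \<rho> V = N" using V unfolding P_def by auto
  have rV: "\<rho> V \<le> dim V" using rk_le[OF SV] .
  have flat: "qflat sc E \<rho> V"
    unfolding qflat_def subsp_iff
  proof (intro conjI SV[THEN conjunct1] SV[THEN conjunct2] ballI)
    fix x assume x: "x \<in> E - V"
    define V' where "V' = span (V \<union> span {x})"
    have xE: "x \<in> E" using x by blast
    have SV': "SS V'" unfolding V'_def using SS_ext[OF SV xE] .
    have dV': "dim V' = dim V + 1" unfolding V'_def
      using dim_insert_le(2)[of V B0 x] SV fd B0 x by blast
    have VV': "V \<subseteq> V'" unfolding V'_def using span_superset by blast
    have m: "\<rho> V \<le> \<rho> V'" using rk_mono[OF SV SV' VV'] .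
    have "dim V' - \<rho> V' \<le> N" using nmax[OF SV'] unfolding N_def .
    then show "\<rho> V < \<rho> V'" using dV' m nV rV rk_le[OF SV'] by linarith
  qed
  have cyc: "qcyc sc \<rho> V = V"
  proof
    show "qcyc sc \<rho> V \<subseteq> V" unfolding qcyc_def by blast
    show "V \<subseteq> qcyc sc \<rho> V"
    proof
      fix x assume xV: "x \<in> V"
      have xE: "x \<in> E" using xV SV by blast
      have "\<rho> W = \<rho> V" if W: "subspace W" "W \<subseteq> V" "span (W \<union> span {x}) = V" for W
      proof (cases "W = V")
        case True then show ?thesis by simp
      next
        case False
        then obtain y where y: "y \<in> V" "y \<notin> W" using W by blast
        have SW: "SS W" using W SV by blast
        have lt: "dim W < dim V" using dim_psub[OF W(2) W(1) y fd B0(1)] SV by blast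
        have "\<not> P W" using minV lt by force
        then have ne: "dim W - \<rho> W \<noteq> N" using SW unfolding P_def by blast
        have le: "dim W - \<rho> W \<le> N" using nmax[OF SW] unfolding N_def .
        have m: "\<rho> W \<le> \<rho> V" using rk_mono[OF SW SV W(2)] .
        have d1: "dim V \<le> dim W + 1"
          using dim_insert_le(1)[of W B0 x] W(1) SW fd B0 W(3) by simp
        have r1: "\<rho> V \<le> \<rho> W + 1" using R1[OF SW xE] W(3) by simp
        show ?thesis using ne le m d1 r1 nV rV rk_le[OF SW] by linarith
      qed
      then show "x \<in> qcyc sc \<rho> V" unfolding qcyc_def using xV by blast
    qed
  qed
  have "V \<in> cyclic_flats sc E \<rho>" unfolding cyclic_flats_def qcyclic_def using flat cyc by blast
  then have VL: "V = L0" using Z by blast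
  have NL: "N = dim L0" using nV VL rk_L0 by simp
  assume SW: "SS W"
  have SWL: "SS (W \<inter> L0)" using SS_int[OF SW SS_L0] .
  have up: "\<rho> W + dim (W \<inter> L0) \<le> \<rho> (W \<inter> L0) + dim W"
    using Nmono[OF SWL SW] by blast
  have "\<rho> (W \<inter> L0) \<le> \<rho> L0" using rk_mono[OF SWL SS_L0] by blast
  then have up': "\<rho> W + dim (W \<inter> L0) \<le> dim W" using up rk_L0 by simp
  define T where "T = span (W \<union> L0)"
  have ST: "SS T" unfolding T_def using SS_span[of "W \<union> L0"] SW SS_L0 by blast
  have sm: "\<rho> T + \<rho> (W \<inter> L0) \<le> \<rho> W + \<rho> L0" unfolding T_def using submod[OF SW SS_L0] .
  have nT: "dim T - \<rho> T \<le> N" using nmax[OF ST] unfolding N_def .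
  have mod: "dim W + dim L0 \<le> dim T + dim (W \<inter> L0)"
    unfolding T_def using dim_modular_ge[of W L0 B0] SW SS_L0 fd B0 by blast
  have "dim (W \<inter> L0) \<le> dim W" using dim_mono'[of "W \<inter> L0" W B0] SW fd B0 by blast
  then show "\<rho> W = dim W - dim (W \<inter> L0)"
    using up' sm nT mod NL rk_L0 rk_le[OF ST] by linarith
qed

lemma dim_single: "x \<noteq> 0 \<Longrightarrow> dim (span {x}) = 1"
  using dim_span_eq_card_independent[of "{x}"] by simp

lemma main_A:
  assumes SL: "SS L" and F: "\<And>V. SS V \<Longrightarrow> \<rho> V = dim V - dim (V \<inter> L)"
  shows "L0 = L" "cyclic_flats sc E \<rho> = {L0}"
proof -
  have "Lp = L"
  proof
    show "L \<subseteq> Lp"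
    proof
      fix x assume x: "x \<in> L"
      have "span {x} \<subseteq> L" using span_minimal[of "{x}" L] x SL by blast
      then have "span {x} \<inter> L = span {x}" by blast
      then show "x \<in> Lp" using F[OF SS_span[of "{x}"]] x SL unfolding Lp_def by auto
    qed
    show "Lp \<subseteq> L"
    proof
      fix x assume x: "x \<in> Lp"
      show "x \<in> L"
      proof (rule ccontr)
        assume xL: "x \<notin> L"
        have x0: "x \<noteq> 0" using xL SL subspace_0 by blast
        have "span {x} \<inter> L \<subseteq> {0}"
        proof
          fix y assume y: "y \<in> span {x} \<inter> L"
          then obtain k where k: "y = sc k x" using span_singleton by blast
          show "y \<in> {0}"
          proof (cases "k = 0")
            case True then show ?thesis using k by simp
          next
            case False
            have "sc (1 / k) y \<in> L" using y SL subspace_scale by blast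
            then have "x \<in> L" using k False by simp
            then show ?thesis using xL by blast
          qed
        qed
        moreover have "0 \<in> span {x} \<inter> L" using SL subspace_0 span_zero by blast
        ultimately have "span {x} \<inter> L = {0}" by blast
        then have "\<rho> (span {x}) = 1" using F[OF SS_span[of "{x}"]] x Lp_E dim_0 dim_single[OF x0] by auto
        then show False using x unfolding Lp_def by simp
      qed
    qed
  qed
  then show L0L: "L0 = L" using L0_eq SL span_subspace_basis[of L L] span_superset by simp
  have "V = L" if VZ: "V \<in> cyclic_flats sc E \<rho>" for V
  proof -
    have flat: "qflat sc E \<rho> V" and cyc: "qcyc sc \<rho> V = V"
      using VZ unfolding cyclic_flats_def qcyclic_def by auto
    have SV: "SS V" using flat unfolding qflat_def subsp_iff by blast
    have LV: "L \<subseteq> V"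
    proof
      fix x assume xL: "x \<in> L"
      show "x \<in> V"
      proof (rule ccontr)
        assume xV: "x \<notin> V"
        have xE: "x \<in> E" using xL SL by blast
        define V' where "V' = span (V \<union> span {x})"
        have SV': "SS V'" unfolding V'_def using SS_ext[OF SV xE] .
        have lt: "\<rho> V < \<rho> V'" using flat xE xV unfolding qflat_def V'_def by blast
        have dV': "dim V' = dim V + 1" unfolding V'_def
          using dim_insert_le(2)[of V B0 x] SV fd B0 xV by blast
        have VV': "V \<subseteq> V'" unfolding V'_def using span_superset by blast
        have xV': "x \<in> V'" unfolding V'_def using span_superset[of "V \<union> span {x}"] span_superset[of "{x}"] by blast
        have "dim (V \<inter> L) < dim (V' \<inter> L)"
          using dim_psub[of "V \<inter> L" "V' \<inter> L" x B0] VV' SS_int[OF SV SL] xV' xL xV SV' fd B0 by blast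
        moreover have "dim (V' \<inter> L) \<le> dim V'" using dim_mono'[of "V' \<inter> L" V' B0] SV' fd B0 by blast
        moreover have "dim (V \<inter> L) \<le> dim V" using dim_mono'[of "V \<inter> L" V B0] SV fd B0 by blast
        ultimately show False using lt dV' F[OF SV] F[OF SV'] by linarith
      qed
    qed
    have VL: "V \<subseteq> L"
    proof
      fix x assume xV: "x \<in> V"
      show "x \<in> L"
      proof (rule ccontr)
        assume xL: "x \<notin> L"
        obtain K where K: "K \<subseteq> L" "independent K" "L \<subseteq> span K"
          using maximal_independent_subset by blast
        have sK: "span K = L" using span_subspace_basis K SL by blast
        have iK: "independent (insert x K)" using independent_insertI[of x K] K sK xL by simp
        have ixV: "insert x K \<subseteq> V" using K LV xV by blast
        obtain B where B: "insert x K \<subseteq> B" "B \<subseteq> V" "independent B" "V \<subseteq> span B"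
          using maximal_independent_subset_extend[OF ixV iK] by blast
        have BB0: "B \<subseteq> span B0" using B(2) SV fd by blast
        have fB: "finite B" using fd_indep_finite[OF B(3) BB0 B0(1)] .
        have sB: "span B = V" using span_subspace_basis[OF B(2) B(4) SV[THEN conjunct1]] .
        define W where "W = span (B - {x})"
        have sW: "subspace W" unfolding W_def by simp
        have BxV: "B - {x} \<subseteq> V" using B(2) by blast
        have WV: "W \<subseteq> V" unfolding W_def using span_minimal[OF BxV SV[THEN conjunct1]] .
        have e1: "span (W \<union> span {x}) = span (W \<union> {x})" by (rule span_Un_span)
        have e2: "W \<union> {x} = {x} \<union> span (B - {x})" unfolding W_def by blast
        have e3: "span ({x} \<union> span (B - {x})) = span ({x} \<union> (B - {x}))" by (rule span_Un_span)
        have e4: "{x} \<union> (B - {x}) = B" using B(1) by blast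
        have WxV: "span (W \<union> span {x}) = V" using e1 e2 e3 e4 sB by simp
        have "x \<in> qcyc sc \<rho> V" using cyc xV by simp
        then have "\<forall>W. subspace W \<and> W \<subseteq> V \<and> span (W \<union> span {x}) = V \<longrightarrow> \<rho> W = \<rho> V"
          unfolding qcyc_def by blast
        then have rWV: "\<rho> W = \<rho> V" using sW WV WxV by blast
        have SW: "SS W" using sW WV SV by blast
        have "x \<notin> K" using xL K by blast
        then have KBx: "K \<subseteq> B - {x}" using B(1) by blast
        have LW: "L \<subseteq> W" unfolding W_def using span_mono[OF KBx] sK by simp
        have iB': "independent (B - {x})" using independent_mono[OF B(3)] by blast
        have xB: "x \<in> B" using B(1) by blast
        have dW: "dim W = card B - 1" unfolding W_def using dim_span_eq_card_independent[OF iB'] xB fB by simp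
        have dV: "dim V = card B" using basis_card_eq_dim[OF B(2) B(4) B(3)] by simp
        have cB: "card B \<ge> 1" using fB xB card_0_eq[OF fB] by (cases "card B") auto
        have dLW: "dim L \<le> dim W" using dim_mono'[OF LW] SW fd B0 by blast
        have "\<rho> W = dim W - dim L" using F[OF SW] LW by (simp add: Int_absorb1)
        moreover have "\<rho> V = dim V - dim L" using F[OF SV] LV by (simp add: Int_absorb1)
        ultimately show False using rWV dW dV cB dLW by linarith
      qed
    qed
    show "V = L" using LV VL by blast
  qed
  then show "cyclic_flats sc E \<rho> = {L0}" using L0_in_Z L0L by blast
qed


lemma vsc: "vector_space sc"
  by (simp add: vector_space_def module_def scale_right_distrib scale_left_distrib)

lemma vpair: "vector_space_pair sc (ss :: 'a \<Rightarrow> _)"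
  unfolding vector_space_pair_def using vsc vs_ss by blast


lemma subspace_K: "module.subspace (ss :: 'a \<Rightarrow> _) {p. snd p = 0}"
proof -
  interpret v2: vector_space "ss :: 'a \<Rightarrow> _" by (rule vs_ss)
  show ?thesis unfolding v2.subspace_def by (auto simp: sum_scale_def fscale_def zero_fun_def)
qed

lemma formula_to_equiv:
  assumes SL: "SS L" and F: "\<And>V. SS V \<Longrightarrow> \<rho> V = dim V - dim (V \<inter> L)"
  shows "equiv_trivial_plus_free sc E \<rho> (dim L) (dim E - dim L)"
proof -
  interpret p: vector_space_pair sc "ss :: 'a \<Rightarrow> _" by (rule vpair)
  define l where "l = dim L"
  define f where "f = dim E - dim L"
  obtain BL where BL: "BL \<subseteq> L" "independent BL" "L \<subseteq> span BL" "card BL = dim L"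
    using basis_exists by blast
  have BLE: "BL \<subseteq> E" using BL SL by blast
  obtain B where B: "BL \<subseteq> B" "B \<subseteq> E" "independent B" "E \<subseteq> span B"
    using maximal_independent_subset_extend[OF BLE BL(2)] by blast
  have BB0: "B \<subseteq> span B0" using B(2) fd by blast
  have fB: "finite B" using fd_indep_finite[OF B(3) BB0 B0(1)] .
  have fBL: "finite BL" using finite_subset[OF B(1) fB] .
  have sB: "span B = E" using span_subspace_basis[OF B(2) B(4) subspE] .
  have sBL: "span BL = L" using span_subspace_basis[OF BL(1) BL(3) SL[THEN conjunct1]] .
  have cB: "card B = dim E" using basis_card_eq_dim[OF B(2) B(4) B(3)] .
  define BR where "BR = B - BL"
  have fBR: "finite BR" unfolding BR_def using fB by simp
  have cBR: "card BR = f" unfolding BR_def f_def using card_Diff_subset[OF fBL B(1)] cB BL(4) by simp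
  obtain e1 where e1: "bij_betw e1 BL {..<l}"
    using finite_same_card_bij[OF fBL, of "{..<l}"] BL(4) l_def by auto
  obtain e2 where e2: "bij_betw e2 BR {..<f}"
    using finite_same_card_bij[OF fBR, of "{..<f}"] cBR by auto
  define g :: "'b \<Rightarrow> (nat \<Rightarrow> 'a) \<times> (nat \<Rightarrow> 'a)"
    where "g b = (if b \<in> BL then (delta (e1 b), 0) else (0, delta (e2 b)))" for b
  define \<psi> where "\<psi> = p.construct B g"
  have lin: "Vector_Spaces.linear sc ss \<psi>" unfolding \<psi>_def using p.linear_construct[OF B(3)] .
  have \<psi>b: "\<psi> b = g b" if "b \<in> B" for b unfolding \<psi>_def using p.construct_basis[OF B(3) that] .
  have gBL: "g ` BL = (\<lambda>i. (delta i, 0)) ` {..<l}"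
  proof -
    have "g ` BL = (\<lambda>i. (delta i, 0)) ` (e1 ` BL)" unfolding g_def by (auto simp: image_iff)
    then show ?thesis using e1 unfolding bij_betw_def by simp
  qed
  have gBR: "g ` BR = (\<lambda>j. (0, delta j)) ` {..<f}"
  proof -
    have "g ` BR = (\<lambda>j. (0, delta j)) ` (e2 ` BR)" unfolding g_def BR_def by (auto simp: image_iff)
    then show ?thesis using e2 unfolding bij_betw_def by simp
  qed
  have BU: "B = BL \<union> BR" unfolding BR_def using B(1) by blast
  have \<psi>B: "\<psi> ` B = stdU l f"
  proof -
    have "\<psi> ` B = g ` B" by (rule image_cong[OF refl]) (use \<psi>b in blast)
    also have "\<dots> = g ` BL \<union> g ` BR" using BU by auto
    finally show ?thesis unfolding stdU_def gBL gBR .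
  qed
  have \<psi>BL: "\<psi> ` BL = stdU l 0"
  proof -
    have "\<psi> ` BL = g ` BL" by (rule image_cong[OF refl]) (use \<psi>b B(1) in blast)
    then show ?thesis unfolding stdU_def gBL by simp
  qed
  have injg: "inj_on g B"
  proof
    fix a b assume a: "a \<in> B" and b: "b \<in> B" and eq: "g a = g b"
    have i1: "inj_on e1 BL" and i2: "inj_on e2 BR" using e1 e2 unfolding bij_betw_def by auto
    show "a = b"
    proof (cases "a \<in> BL"; cases "b \<in> BL")
      assume "a \<in> BL" "b \<in> BL"
      then show ?thesis using eq i1 by (auto simp: g_def delta_eq_iff inj_on_def)
    next
      assume "a \<in> BL" "b \<notin> BL"
      then show ?thesis using eq delta_ne0 by (auto simp: g_def)
    next
      assume "a \<notin> BL" "b \<in> BL"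
      then show ?thesis using eq delta_ne0 by (auto simp: g_def)
    next
      assume "a \<notin> BL" "b \<notin> BL"
      then have "a \<in> BR" "b \<in> BR" using a b BR_def by auto
      then show ?thesis using eq i2 \<open>a \<notin> BL\<close> \<open>b \<notin> BL\<close> by (auto simp: g_def delta_eq_iff inj_on_def)
    qed
  qed
  have inj\<psi>B: "inj_on \<psi> B" using injg \<psi>b by (auto simp: inj_on_def)
  have indep: "p.vs2.independent (\<psi> ` B)" unfolding \<psi>B by (rule std_indep)
  have injE: "inj_on \<psi> E"
    using p.linear_inj_on_span_independent_image[OF lin indep inj\<psi>B] sB by simp
  have "\<psi> ` E = p.vs2.span (\<psi> ` B)" using p.linear_span_image[OF lin, of B] sB by simp
  also have "\<dots> = Fn l \<times> Fn f" unfolding \<psi>B by (rule std_span)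
  finally have \<psi>E: "\<psi> ` E = Fn l \<times> Fn f" .
  have "\<psi> ` L = p.vs2.span (\<psi> ` BL)" using p.linear_span_image[OF lin, of BL] sBL by simp
  also have "\<dots> = Fn l \<times> Fn 0" unfolding \<psi>BL by (rule std_span)
  finally have \<psi>L0: "\<psi> ` L = Fn l \<times> Fn 0" .
  have F0: "Fn 0 = ({0} :: (nat \<Rightarrow> 'a) set)" by (rule Fn_0)
  have \<psi>L: "\<psi> ` L = Fn l \<times> {0}" using \<psi>L0 unfolding F0 .
  have bij: "bij_betw \<psi> E (Fn l \<times> Fn f)" unfolding bij_betw_def using injE \<psi>E by blast
  have rank: "sum_rank fscale rank_trivial fscale rank_free (\<psi> ` V) = \<rho> V" if SV: "SS V" for V
  proof -
    let ?K = "{p :: (nat \<Rightarrow> 'a) \<times> (nat \<Rightarrow> 'a). snd p = 0}"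
    have VE: "V \<subseteq> E" using SV by blast
    have fin: "finite (\<psi> ` V)"
      using finite_subset[of "\<psi> ` V" "Fn l \<times> Fn f"] \<psi>E VE finite_Fn by blast
    have sub: "p.vs2.subspace (\<psi> ` V)" using p.linear_subspace_image[OF lin] SV by blast
    have eqK: "\<psi> ` V \<inter> ?K = \<psi> ` (V \<inter> L)"
    proof
      show "\<psi> ` (V \<inter> L) \<subseteq> \<psi> ` V \<inter> ?K"
      proof
        fix y assume "y \<in> \<psi> ` (V \<inter> L)"
        then obtain x where x: "x \<in> V" "x \<in> L" "y = \<psi> x" by blast
        have "\<psi> x \<in> Fn l \<times> {0}" using x(2) \<psi>L by blast
        then show "y \<in> \<psi> ` V \<inter> ?K" using x by auto
      qed
      show "\<psi> ` V \<inter> ?K \<subseteq> \<psi> ` (V \<inter> L)"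
      proof
        fix y assume y: "y \<in> \<psi> ` V \<inter> ?K"
        then obtain v where v: "v \<in> V" "y = \<psi> v" by blast
        have "y \<in> Fn l \<times> Fn f" using v VE \<psi>E by blast
        then have "y \<in> Fn l \<times> {0}" using y by (cases y) auto
        then obtain w where w: "w \<in> L" "y = \<psi> w" using \<psi>L by (metis imageE)
        have "v = w" using injE v w VE SL unfolding inj_on_def by blast
        then show "y \<in> \<psi> ` (V \<inter> L)" using v w by blast
      qed
    qed
    have injV: "inj_on \<psi> V" using inj_on_subset[OF injE VE] .
    have injVL: "inj_on \<psi> (V \<inter> L)" using inj_on_subset[OF injE] VE by blast
    have "sum_rank fscale rank_trivial fscale rank_free (\<psi> ` V) = p.vs2.dim (\<psi> ` V) - p.vs2.dim (\<psi> ` V \<inter> ?K)"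
      using sum_rank_formula[OF fin sub] .
    also have "\<dots> = dim V - dim (V \<inter> L)"
      unfolding eqK using p.dim_image_inj[OF lin injV] p.dim_image_inj[OF lin injVL]
        SV SS_int[OF SV SL] by simp
    also have "\<dots> = \<rho> V" using F[OF SV] by simp
    finally show ?thesis .
  qed
  have "qequiv sc E \<rho> ss (Fn l \<times> Fn f) (sum_rank fscale rank_trivial fscale rank_free)"
    unfolding qequiv_def
  proof (intro exI[of _ \<psi>] conjI ballI allI impI)
    show "bij_betw \<psi> E (Fn l \<times> Fn f)" by (rule bij)
    show "\<psi> (x + y) = \<psi> x + \<psi> y" for x y using p.linear_add[OF lin] .
    show "\<psi> (sc c x) = ss c (\<psi> x)" for c x using p.linear_scale[OF lin] .
    show "sum_rank fscale rank_trivial fscale rank_free (\<psi> ` V) = \<rho> V" if "subsp sc E V" for V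
      using rank that subsp_iff by blast
  qed
  then show ?thesis unfolding equiv_trivial_plus_free_def l_def f_def .
qed


lemma equiv_to_formula:
  assumes EQ: "equiv_trivial_plus_free sc E \<rho> l f"
  shows "\<exists>L. SS L \<and> (\<forall>V. SS V \<longrightarrow> \<rho> V = dim V - dim (V \<inter> L))"
proof -
  interpret p: vector_space_pair sc "ss :: 'a \<Rightarrow> _" by (rule vpair)
  obtain \<phi> where bij: "bij_betw \<phi> E (Fn l \<times> Fn f)"
    and add: "\<forall>x\<in>E. \<forall>y\<in>E. \<phi> (x + y) = \<phi> x + \<phi> y"
    and hom: "\<forall>c. \<forall>x\<in>E. \<phi> (sc c x) = ss c (\<phi> x)"
    and rk: "\<forall>V. subsp sc E V \<longrightarrow> sum_rank fscale rank_trivial fscale rank_free (\<phi> ` V) = \<rho> V"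
    using EQ unfolding equiv_trivial_plus_free_def qequiv_def by blast
  obtain B where B: "B \<subseteq> E" "independent B" "E \<subseteq> span B"
    using maximal_independent_subset by blast
  have sB: "span B = E" using span_subspace_basis[OF B(1) B(3) subspE] .
  define \<psi> where "\<psi> = p.construct B \<phi>"
  have lin: "Vector_Spaces.linear sc ss \<psi>" unfolding \<psi>_def using p.linear_construct[OF B(2)] .
  have \<psi>b: "\<psi> b = \<phi> b" if "b \<in> B" for b unfolding \<psi>_def using p.construct_basis[OF B(2) that] .
  have E0: "0 \<in> E" using subspE subspace_0 by blast
  have \<phi>0: "\<phi> 0 = 0"
  proof -
    have "\<phi> (0 + 0) = \<phi> 0 + \<phi> 0" using add E0 by blast
    then show ?thesis by simp
  qed
  have agree: "x \<in> E \<and> \<psi> x = \<phi> x" if "x \<in> span B" for x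
    using that
  proof (induction rule: span_induct_alt)
    case base
    then show ?case using E0 \<phi>0 p.linear_0[OF lin] by simp
  next
    case (step c x y)
    have xE: "x \<in> E" using step B(1) by blast
    have cxE: "sc c x \<in> E" using subspE subspace_scale xE by blast
    have "\<psi> (sc c x + y) = ss c (\<psi> x) + \<psi> y"
      using p.linear_add[OF lin] p.linear_scale[OF lin] by simp
    also have "\<dots> = ss c (\<phi> x) + \<phi> y" using \<psi>b step by simp
    also have "\<dots> = \<phi> (sc c x) + \<phi> y" using hom xE by simp
    also have "\<dots> = \<phi> (sc c x + y)" using add cxE step by simp
    moreover have "sc c x + y \<in> E" using subspace_add[OF subspE cxE] step by blast
    ultimately show ?case by simp
  qed
  have eqE: "\<psi> x = \<phi> x" if "x \<in> E" for x using agree sB that by blast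
  have inj\<phi>: "inj_on \<phi> E" using bij by (simp add: bij_betw_def)
  have injE: "inj_on \<psi> E" using inj\<phi> inj_on_cong[of E \<psi> \<phi>] eqE by simp
  have \<psi>E: "\<psi> ` E = Fn l \<times> Fn f"
  proof -
    have "\<psi> ` E = \<phi> ` E" by (rule image_cong[OF refl]) (use eqE in blast)
    then show ?thesis using bij unfolding bij_betw_def by simp
  qed
  let ?K = "{p :: (nat \<Rightarrow> 'a) \<times> (nat \<Rightarrow> 'a). snd p = 0}"
  define L where "L = E \<inter> \<psi> -` ?K"
  have SL: "SS L"
    unfolding L_def using subspace_inter[OF subspE p.linear_subspace_vimage[OF lin subspace_K]] by blast
  have "\<rho> V = dim V - dim (V \<inter> L)" if SV: "SS V" for V
  proof -
    have VE: "V \<subseteq> E" using SV by blast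
    have im: "\<phi> ` V = \<psi> ` V"
    proof (rule image_cong[OF refl])
      fix x assume "x \<in> V"
      then have "x \<in> E" using VE by blast
      then show "\<phi> x = \<psi> x" using eqE by simp
    qed
    have "\<psi> ` V \<subseteq> \<psi> ` E" using VE by (rule image_mono)
    then have "\<psi> ` V \<subseteq> Fn l \<times> Fn f" unfolding \<psi>E .
    then have fin: "finite (\<psi> ` V)"
      by (rule finite_subset[OF _ finite_cartesian_product[OF finite_Fn finite_Fn]])
    have sub: "p.vs2.subspace (\<psi> ` V)" using p.linear_subspace_image[OF lin SV[THEN conjunct1]] .
    have eqK: "\<psi> ` V \<inter> ?K = \<psi> ` (V \<inter> L)"
    proof
      show "\<psi> ` V \<inter> ?K \<subseteq> \<psi> ` (V \<inter> L)"
      proof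
        fix y assume "y \<in> \<psi> ` V \<inter> ?K"
        then obtain v where v: "v \<in> V" "y = \<psi> v" "snd (\<psi> v) = 0" by blast
        then have "v \<in> L" unfolding L_def using VE by blast
        then show "y \<in> \<psi> ` (V \<inter> L)" using v by blast
      qed
      show "\<psi> ` (V \<inter> L) \<subseteq> \<psi> ` V \<inter> ?K" unfolding L_def by blast
    qed
    have injV: "inj_on \<psi> V" using inj_on_subset[OF injE VE] .
    have injVL: "inj_on \<psi> (V \<inter> L)" using inj_on_subset[OF injE] VE by blast
    have r1: "sum_rank fscale rank_trivial fscale rank_free (\<phi> ` V) = \<rho> V"
      using rk SV unfolding subsp_iff by blast
    have "\<rho> V = sum_rank fscale rank_trivial fscale rank_free (\<psi> ` V)"
      using r1 unfolding im by simp
    also have "\<dots> = p.vs2.dim (\<psi> ` V) - p.vs2.dim (\<psi> ` V \<inter> ?K)"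
      using sum_rank_formula[OF fin sub] .
    also have "\<dots> = dim V - dim (V \<inter> L)"
      unfolding eqK using p.dim_image_inj[OF lin injV] p.dim_image_inj[OF lin injVL]
        SV SS_int[OF SV SL] by simp
    finally show ?thesis .
  qed
  then show ?thesis using SL by blast
qed

end


theorem corollary7p10:
  fixes sc :: "'a::{field,finite} \<Rightarrow> 'b::ab_group_add \<Rightarrow> 'b"
    and E :: "'b set" and \<rho> :: "'b set \<Rightarrow> nat"
  assumes "qmatroid sc E \<rho>"
  defines "l \<equiv> Vector_Spaces.vector_space.dim sc (qcl sc E \<rho> {0})"
  defines "f \<equiv> Vector_Spaces.vector_space.dim sc E - l"
  shows "(cyclic_flats sc E \<rho> = {qcl sc E \<rho> {0}} \<longleftrightarrow> equiv_trivial_plus_free sc E \<rho> l f)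
     \<and> (card (cyclic_flats sc E \<rho>) = 1 \<longleftrightarrow> (\<exists>l' f'. equiv_trivial_plus_free sc E \<rho> l' f'))"
proof -
  have vs: "vector_space sc" using assms(1) unfolding qmatroid_def ground_space_def by blast
  interpret Q: qm sc E \<rho> by (intro qm.intro vs qm_axioms.intro assms(1))
  have fwd: "equiv_trivial_plus_free sc E \<rho> l f" if Z: "cyclic_flats sc E \<rho> = {Q.L0}"
  proof -
    have "\<And>W. Q.SS W \<Longrightarrow> \<rho> W = Q.dim W - Q.dim (W \<inter> Q.L0)" using Q.main_B[OF Z] by blast
    then show ?thesis using Q.formula_to_equiv[OF Q.SS_L0] unfolding l_def f_def by blast
  qed
  have bwd: "cyclic_flats sc E \<rho> = {Q.L0}" if EQ: "equiv_trivial_plus_free sc E \<rho> l' f'" for l' f'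
  proof -
    obtain L where L: "Q.SS L" "\<And>V. Q.SS V \<Longrightarrow> \<rho> V = Q.dim V - Q.dim (V \<inter> L)"
      using Q.equiv_to_formula[OF EQ] by blast
    show ?thesis using Q.main_A(2)[OF L(1) L(2)] by blast
  qed
  have c1: "card (cyclic_flats sc E \<rho>) = 1 \<longleftrightarrow> cyclic_flats sc E \<rho> = {Q.L0}"
  proof
    assume "card (cyclic_flats sc E \<rho>) = 1"
    then obtain a where a: "cyclic_flats sc E \<rho> = {a}" using card_1_singletonE by blast
    then show "cyclic_flats sc E \<rho> = {Q.L0}" using Q.L0_in_Z by blast
  next
    assume "cyclic_flats sc E \<rho> = {Q.L0}"
    then show "card (cyclic_flats sc E \<rho>) = 1" by simp
  qed
  show ?thesis using fwd bwd c1 by blast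
qed

end
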